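(* Let $\mathcal{M}=\langle M,\circ,e\rangle$ be an mge monoid. Then $\mathcal{M}$ has left cancellation (for all $a,b,c\in M$, $ca=cb$ implies $a=b$), and for every $m\in M$ the pair $\langle e,e\rangle$ is an mge of $\langle m,m\rangle$.
   Context: In a monoid $\langle M,\circ,e\rangle$, a tuple $\langle m_1,\dots,m_n\rangle\in M^n$ is equalizable if there is $\langle x_1,\dots,x_n\rangle\in M^n$ (an equalizer) with $m_1x_1=\dots=m_nx_n$; an equalizer is a most general equalizer (mge) if every equalizer has the form $\langle x_1x,\dots,x_nx\rangle$ for some $x\in M$. An mge monoid is a monoid with right cancellation ($ac=bc\Rightarrow a=b$) in which every equalizable pair has an mge. *)

theory Defs
  imports Main
begin

text \<open>Monoids are modelled by the type class monoid_mult: carrier = the type,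
  operation = (*), neutral element e = 1. Only pairs (n = 2) are needed.\<close>

definition equalizer :: "'a::monoid_mult \<Rightarrow> 'a \<Rightarrow> 'a \<Rightarrow> 'a \<Rightarrow> bool" where
  "equalizer m1 m2 x1 x2 \<longleftrightarrow> m1 * x1 = m2 * x2"

definition equalizable :: "'a::monoid_mult \<Rightarrow> 'a \<Rightarrow> bool" where
  "equalizable m1 m2 \<longleftrightarrow> (\<exists>x1 x2. equalizer m1 m2 x1 x2)"

definition mge :: "'a::monoid_mult \<Rightarrow> 'a \<Rightarrow> 'a \<Rightarrow> 'a \<Rightarrow> bool" where
  "mge m1 m2 x1 x2 \<longleftrightarrow> equalizer m1 m2 x1 x2 \<and>
     (\<forall>y1 y2. equalizer m1 m2 y1 y2 \<longrightarrow> (\<exists>x. y1 = x1 * x \<and> y2 = x2 * x))"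

definition right_cancel :: "'a::monoid_mult itself \<Rightarrow> bool" where
  "right_cancel _ \<longleftrightarrow> (\<forall>a b c :: 'a. a * c = b * c \<longrightarrow> a = b)"

definition left_cancel :: "'a::monoid_mult itself \<Rightarrow> bool" where
  "left_cancel _ \<longleftrightarrow> (\<forall>a b c :: 'a. c * a = c * b \<longrightarrow> a = b)"

definition mge_monoid :: "'a::monoid_mult itself \<Rightarrow> bool" where
  "mge_monoid T \<longleftrightarrow> right_cancel T \<and>
     (\<forall>m1 m2 :: 'a. equalizable m1 m2 \<longrightarrow> (\<exists>x1 x2. mge m1 m2 x1 x2))"

end

theory Submission
  imports Defs
begin

theorem lemma2:
  assumes "mge_monoid TYPE('a::monoid_mult)"
  shows "left_cancel TYPE('a) \<and> (\<forall>m :: 'a. mge m m 1 1)"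
proof -
  have rc: "\<And>a b c :: 'a. a * c = b * c \<Longrightarrow> a = b"
    using assms unfolding mge_monoid_def right_cancel_def by blast
  have ex: "\<And>m1 m2 :: 'a. equalizable m1 m2 \<Longrightarrow> \<exists>x1 x2. mge m1 m2 x1 x2"
    using assms unfolding mge_monoid_def by blast
  have lc: "\<And>a b c :: 'a. c * a = c * b \<Longrightarrow> a = b"
  proof -
    fix a b c :: 'a
    assume h: "c * a = c * b"
    have "equalizable c c" unfolding equalizable_def equalizer_def by blast
    then obtain x1 x2 where m: "mge c c x1 x2" using ex by blast
    have "equalizer c c 1 1" unfolding equalizer_def by simp
    then obtain x where "1 = x1 * x" "1 = x2 * x" using m unfolding mge_def by blast
    then have "x1 = x2" using rc by metis
    moreover have "equalizer c c a b" unfolding equalizer_def using h .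
    then obtain y where "a = x1 * y" "b = x2 * y" using m unfolding mge_def by blast
    ultimately show "a = b" by simp
  qed
  show ?thesis
    unfolding left_cancel_def mge_def equalizer_def using lc by auto
qed

end
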